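(* Let $r\in(0,1)$ and $k\geq1$ an integer. Let $W$ be a positive random variable (cascade multiplier) with $\log W=a+bN$, $N\sim\mathrm{Poisson}(\lambda)$, where $a\in\mathbb{R}$, $b<0$, $\lambda>0$. Define the scaling exponents $\zeta_p$ by $\mathbb{E}[W^p]=r^{\zeta_p}$ and $\delta_p=\zeta_{p+k}-\zeta_p$. Then, with $\beta=e^{bk}\in(0,1)$, the limit $\delta_\infty=\lim_{p\to\infty}\delta_p$ exists and is finite and $$\delta_{p+k}=(1-\beta)\delta_\infty+\beta\delta_p\qquad\text{for all }p\in k\mathbb{N}_0=\{0,k,2k,\dots\},$$ i.e.\ the hierarchical symmetry axiom A1 holds. *)

theory Defs
  imports "HOL-Probability.Probability"
begin

definition scaling_exponent :: "'a measure \<Rightarrow> ('a \<Rightarrow> real) \<Rightarrow> real \<Rightarrow> real \<Rightarrow> real" where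
  "scaling_exponent M W r p = ln (integral\<^sup>L M (\<lambda>\<omega>. W \<omega> powr p)) / ln r"

definition scaling_delta :: "'a measure \<Rightarrow> ('a \<Rightarrow> real) \<Rightarrow> real \<Rightarrow> real \<Rightarrow> real \<Rightarrow> real" where
  "scaling_delta M W r k p = scaling_exponent M W r (p + k) - scaling_exponent M W r p"

end

theory Submission imports Defs begin

lemma intW:
  fixes M :: "'a measure" and N :: "'a \<Rightarrow> nat" and W :: "'a \<Rightarrow> real" and a b l p :: real
  assumes "0 < l"
    and N: "N \<in> measurable M (count_space UNIV)"
    and D: "distr M (count_space UNIV) N = measure_pmf (poisson_pmf l)"
    and W: "\<And>\<omega>. W \<omega> = exp (a + b * real (N \<omega>))"
  shows "integral\<^sup>L M (\<lambda>\<omega>. W \<omega> powr p) = exp (p*a + l*(exp (p*b) - 1))"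
proof -
  define f where "f n = exp (p*(a + b*real n))" for n :: nat
  define g where "g n = exp (-l) * exp (p*a) * ((l*exp (p*b))^n / fact n)" for n :: nat
  have 1: "(\<lambda>\<omega>. W \<omega> powr p) = (\<lambda>\<omega>. f (N \<omega>))"
    by (auto simp: W f_def powr_def mult.commute)
  have 2: "integral\<^sup>L M (\<lambda>\<omega>. f (N \<omega>)) = integral\<^sup>L (measure_pmf (poisson_pmf l)) f"
    using integral_distr[OF N, of f] D by simp
  have 3: "integral\<^sup>L (measure_pmf (poisson_pmf l)) f = integral\<^sup>L (count_space UNIV) (\<lambda>n. pmf (poisson_pmf l) n *\<^sub>R f n)"
    by (simp add: measure_pmf_eq_density integral_density)
  have g: "(\<lambda>n. pmf (poisson_pmf l) n *\<^sub>R f n) = g"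
    using assms(1) by (auto simp: g_def f_def fun_eq_iff exp_add[symmetric] exp_of_nat_mult[symmetric] power_mult_distrib algebra_simps)
  have s: "(\<lambda>n. (l*exp (p*b))^n / fact n) sums exp (l*exp (p*b))"
    using exp_converges[of "l*exp (p*b)"] by (simp add: divide_inverse mult.commute)
  have gs: "g sums (exp (-l) * exp (p*a) * exp (l*exp (p*b)))"
    unfolding g_def by (intro sums_mult s)
  have "integrable (count_space UNIV) g"
  proof -
    have "(\<lambda>n. norm (g n)) = g" using assms(1) by (auto simp: g_def fun_eq_iff)
    then show ?thesis unfolding integrable_count_space_nat_iff
      using gs sums_summable by metis
  qed
  then have "integral\<^sup>L (count_space UNIV) g = exp (-l) * exp (p*a) * exp (l*exp (p*b))"
    using integral_count_space_nat gs sums_unique by metis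
  also have "\<dots> = exp (p*a + l*(exp (p*b) - 1))"
    by (simp add: exp_add[symmetric] algebra_simps)
  finally show ?thesis using 1 2 3 g by simp
qed

theorem mainTheorem6:
  fixes M :: "'a measure" and N :: "'a \<Rightarrow> nat" and W :: "'a \<Rightarrow> real"
    and r a b l :: real and k :: nat
  assumes "prob_space M"
    and "0 < r" "r < 1" "k \<ge> 1"
    and "b < 0" "0 < l"
    and "N \<in> measurable M (count_space UNIV)"
    and "distr M (count_space UNIV) N = measure_pmf (poisson_pmf l)"
    and "\<And>\<omega>. W \<omega> = exp (a + b * real (N \<omega>))"
  shows "0 < exp (b * real k) \<and> exp (b * real k) < 1 \<and>
    (\<exists>\<delta>inf::real. ((\<lambda>p. scaling_delta M W r (real k) p) \<longlongrightarrow> \<delta>inf) at_top \<and>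
       (\<forall>n::nat. scaling_delta M W r (real k) (real (n * k) + real k)
          = (1 - exp (b * real k)) * \<delta>inf + exp (b * real k) * scaling_delta M W r (real k) (real (n * k))))"
proof -
  have I: "\<And>p. integral\<^sup>L M (\<lambda>\<omega>. W \<omega> powr p) = exp (p*a + l*(exp (p*b) - 1))"
    using intW[OF assms(6,7,8,9)] by blast
  have D: "scaling_delta M W r (real k) p = (real k * a + l*(exp (b*real k) - 1)*exp (p*b)) / ln r" for p
    unfolding scaling_delta_def scaling_exponent_def I
    by (simp add: diff_divide_distrib[symmetric] algebra_simps exp_add[symmetric])
  have kpos: "real k > 0" using assms(4) by simp
  have b1: "exp (b * real k) < 1" using assms(5) kpos by (simp add: mult_neg_pos)
  have e0: "((\<lambda>p::real. exp (p*b)) \<longlongrightarrow> 0) at_top"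
  proof -
    have "filterlim (\<lambda>p::real. b*p) at_bot at_top"
      by (rule filterlim_tendsto_neg_mult_at_bot[OF tendsto_const assms(5) filterlim_ident])
    then have "filterlim (\<lambda>p::real. p*b) at_bot at_top" by (simp add: mult.commute)
    then show ?thesis using exp_at_bot filterlim_compose by blast
  qed
  have lim: "((\<lambda>p. scaling_delta M W r (real k) p) \<longlongrightarrow> real k * a / ln r) at_top"
  proof -
    have "ln r \<noteq> 0" using assms(2,3) by simp
    have "((\<lambda>p. (real k * a + l*(exp (b*real k) - 1)*exp (p*b)) / ln r) \<longlongrightarrow> (real k * a + l*(exp (b*real k) - 1)*0) / ln r) at_top"
      by (intro tendsto_intros e0 \<open>ln r \<noteq> 0\<close>)
    then show ?thesis unfolding D by simp
  qed
  show ?thesis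
  proof (intro conjI exI[of _ "real k * a / ln r"] lim allI)
    fix n :: nat
      have "ln r \<noteq> 0" using assms(2,3) by simp
      then show "scaling_delta M W r (real k) (real (n * k) + real k)
          = (1 - exp (b * real k)) * (real k * a / ln r) + exp (b * real k) * scaling_delta M W r (real k) (real (n * k))"
      unfolding D by (simp add: field_simps exp_add[symmetric])
  qed (use b1 in auto)
qed

end
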